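(* Let $\varphi:\mathcal X\to\mathbb R^m$ be a feature map and let $p,q$ be probability distributions on $\mathcal X$ that have full support and are mutually absolutely continuous (so that $dp/dq$ is finite and strictly positive). Then $$F(p\|q,\varphi)\le D(p\|q),$$ with equality if and only if, for $\nu$-almost every $\rho$ in the support of $\nu$, there exists $\theta(\rho)\in\mathbb R^m$ such that for almost all $x\in\mathcal X$, $$\frac{\frac{dp}{dq}(x)-1}{\rho\frac{dp}{dq}(x)+1-\rho}=\theta(\rho)^\top\varphi(x).$$
   Context: Let $\nu$ be a probability measure on $[0,1]$ and define the convex function $f(t)=\int_0^1\frac12\frac{(t-1)^2}{\rho t+1-\rho}\,d\nu(\rho)$ for $t>0$ (these are exactly the operator-convex functions with $f(1)=f'(1)=0$, $f''(1)=1$; e.g. $d\nu(\rho)=2(1-\rho)d\rho$ gives $f(t)=t\log t-t+1$). The $f$-divergence is $D(p\|q)=\int_{\mathcal X} f\big(\frac{dp}{dq}(x)\big)\,dq(x)$. Standing assumption: $dp/dq$ exists and takes values in $[\alpha,1/\alpha]$ for some $\alpha\in(0,1]$. Moments: $\mu_p=\int\varphi\,dp$, $\mu_q=\int\varphi\,dq$, $\Sigma_p=\int\varphi\varphi^\top dp$, $\Sigma_q=\int\varphi\varphi^\top dq$ (assumed finite). The moment-based divergence is $$F(p\|q,\varphi)=\frac12\int_0^1(\mu_p-\mu_q)^\top(\rho\Sigma_p+(1-\rho)\Sigma_q)^{-1}(\mu_p-\mu_q)\,d\nu(\rho),$$ where, when the matrices are not invertible, this is understood as $\inf_{t:(0,1)\to\mathbb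 R}\frac12\int_0^1 t(\rho)\,d\nu(\rho)$ subject to $\begin{pmatrix}\rho\Sigma_p+(1-\rho)\Sigma_q & \mu_p-\mu_q\\ (\mu_p-\mu_q)^\top & t(\rho)\end{pmatrix}\succeq 0$ for all $\rho$ (at $\rho=0,1$ the matrix $\rho\Sigma_p+(1-\rho)\Sigma_q$ is $\Sigma_q$, resp. $\Sigma_p$). *)

theory Defs
  imports "HOL-Probability.Probability"
begin

definition dens :: "'a measure \<Rightarrow> 'a measure \<Rightarrow> 'a \<Rightarrow> real" where
  "dens p q x = enn2real (RN_deriv q p x)"

definition fgen :: "real measure \<Rightarrow> real \<Rightarrow> real" where
  "fgen \<nu> t = (\<integral>\<rho>. (1/2) * (t - 1)^2 / (\<rho> * t + 1 - \<rho>) \<partial>\<nu>)"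

definition fdiv :: "real measure \<Rightarrow> 'a measure \<Rightarrow> 'a measure \<Rightarrow> real" where
  "fdiv \<nu> p q = (\<integral>x. fgen \<nu> (dens p q x) \<partial>q)"

definition outer :: "real^'m \<Rightarrow> real^'m^'m" where
  "outer v = (\<chi> i j. v $ i * v $ j)"

definition mean :: "'a measure \<Rightarrow> ('a \<Rightarrow> real^'m) \<Rightarrow> real^'m" where
  "mean p \<phi> = (\<integral>x. \<phi> x \<partial>p)"

definition second_moment :: "'a measure \<Rightarrow> ('a \<Rightarrow> real^'m) \<Rightarrow> real^'m^'m" where
  "second_moment p \<phi> = (\<integral>x. outer (\<phi> x) \<partial>p)"

definition psd :: "real^'n^'n \<Rightarrow> bool" where
  "psd A \<longleftrightarrow> transpose A = A \<and> (\<forall>x. 0 \<le> x \<bullet> (A *v x))"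

definition block :: "real^'m^'m \<Rightarrow> real^'m \<Rightarrow> real \<Rightarrow> real^('m option)^('m option)" where
  "block M d t = (\<chi> i j. case (i, j) of
      (Some a, Some b) \<Rightarrow> M $ a $ b
    | (Some a, None) \<Rightarrow> d $ a
    | (None, Some b) \<Rightarrow> d $ b
    | (None, None) \<Rightarrow> t)"

definition moment_div :: "real measure \<Rightarrow> 'a measure \<Rightarrow> 'a measure \<Rightarrow> ('a \<Rightarrow> real^'m) \<Rightarrow> real" where
  "moment_div \<nu> p q \<phi> = Inf {(1/2) * (\<integral>\<rho>. t \<rho> \<partial>\<nu>) | t. integrable \<nu> t \<and>
      (\<forall>\<rho>\<in>{0..1}. psd (block (\<rho> *\<^sub>R second_moment p \<phi> + (1 - \<rho>) *\<^sub>R second_moment q \<phi>)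
                             (mean p \<phi> - mean q \<phi>) (t \<rho>)))}"

end

theory Submission
  imports Defs "HOL-Analysis.Analysis"
begin


lemma outer_quad: "\<theta> \<bullet> (outer v *v \<theta>) = (\<theta> \<bullet> v)^2"
proof -
  have "\<theta> \<bullet> (outer v *v \<theta>) = (\<Sum>i\<in>UNIV. \<theta>$i * (\<Sum>j\<in>UNIV. v$i * v$j * \<theta>$j))"
    by (simp add: inner_vec_def outer_def matrix_vector_mult_def)
  also have "\<dots> = (\<Sum>i\<in>UNIV. \<theta>$i * v$i) * (\<Sum>j\<in>UNIV. v$j * \<theta>$j)"
    by (simp add: sum_distrib_left sum_distrib_right mult_ac)
  finally show ?thesis by (simp add: inner_vec_def power2_eq_square mult_ac)
qed

lemma transpose_outer: "transpose (outer v) = outer v"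
  by (simp add: transpose_def outer_def vec_eq_iff mult_ac)

lemma block_quad:
  fixes v :: "real^('m::finite option)"
  shows "v \<bullet> (block M d t *v v) = (\<chi> a. v $ Some a) \<bullet> (M *v (\<chi> a. v $ Some a))
     + 2 * (v $ None) * (d \<bullet> (\<chi> a. v $ Some a)) + (v $ None)^2 * t"
proof -
  have U: "(UNIV :: 'm::finite option set) = insert None (Some ` UNIV)" by (rule UNIV_option_conv)
  have S: "(\<Sum>i\<in>(UNIV :: 'm::finite option set). f i) = f None + (\<Sum>a\<in>UNIV. f (Some a))" for f :: "'m::finite option \<Rightarrow> real"
    by (subst U, subst sum.insert) (auto simp: sum.reindex)
  show ?thesis
    by (simp add: inner_vec_def matrix_vector_mult_def block_def S sum.distrib
          sum_distrib_left sum_distrib_right algebra_simps power2_eq_square)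
qed

lemma block_sym: "transpose M = M \<Longrightarrow> transpose (block M d t) = block M d t"
  by (auto simp: transpose_def block_def vec_eq_iff split: option.splits)

lemma linear_quad: "bounded_linear (\<lambda>A::real^'m^'m. \<theta> \<bullet> (A *v \<theta>))"
  apply (rule linear_conv_bounded_linear[THEN iffD1])
  apply (rule linearI)
  by (simp_all add: matrix_vector_mult_def inner_vec_def vec_eq_iff sum.distrib algebra_simps sum_distrib_left)

lemma linear_transpose': "bounded_linear (transpose :: real^'m^'m \<Rightarrow> real^'m^'m)"
  apply (rule linear_conv_bounded_linear[THEN iffD1])
  apply (rule linearI)
  by (simp_all add: transpose_def vec_eq_iff)



definition cl :: "real \<Rightarrow> real" where "cl \<rho> = max 0 (min 1 \<rho>)"

lemma cl_range: "0 \<le> cl \<rho>" "cl \<rho> \<le> 1" by (auto simp: cl_def)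
lemma cl_id: "\<rho> \<in> {0..1} \<Longrightarrow> cl \<rho> = \<rho>" by (auto simp: cl_def)
lemma cl_meas[measurable]: "cl \<in> borel_measurable borel" unfolding cl_def by measurable

locale P1 = q: prob_space q + p: prob_space p + nu: prob_space \<nu>
  for \<nu> :: "real measure" and p q :: "'a measure" and \<phi> :: "'a \<Rightarrow> real^'m::finite" and \<alpha> :: real +
  assumes nu_sets: "sets \<nu> = sets borel"
    and nu_supp: "emeasure \<nu> {0..1} = 1"
    and pq_sets: "sets p = sets q"
    and ac_pq: "absolutely_continuous q p" and ac_qp: "absolutely_continuous p q"
    and alpha: "0 < \<alpha>" "\<alpha> \<le> 1"
    and dens_bounds: "AE x in q. \<alpha> \<le> dens p q x \<and> dens p q x \<le> 1 / \<alpha>"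
    and phi_meas[measurable]: "\<phi> \<in> borel_measurable q"
    and int_p: "integrable p \<phi>" and int_q: "integrable q \<phi>"
    and int2_p: "integrable p (\<lambda>x. outer (\<phi> x))" and int2_q: "integrable q (\<lambda>x. outer (\<phi> x))"
begin

definition R where "R x = max \<alpha> (min (1/\<alpha>) (dens p q x))"
definition w where "w \<rho> x = \<rho> * R x + 1 - \<rho>"
definition Sp where "Sp = second_moment p \<phi>"
definition Sq where "Sq = second_moment q \<phi>"
definition dv where "dv = mean p \<phi> - mean q \<phi>"
definition Mr where "Mr \<rho> = \<rho> *\<^sub>R Sp + (1 - \<rho>) *\<^sub>R Sq"
definition aa where "aa \<rho> \<theta> = 2 * (dv \<bullet> \<theta>) - \<theta> \<bullet> (Mr \<rho> *v \<theta>)"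
definition g' where "g' \<rho> = (\<integral>x. (R x - 1)^2 / w \<rho> x \<partial>q)"

lemma R_meas[measurable]: "R \<in> borel_measurable q"
  unfolding R_def dens_def by measurable

lemma R_bounds: "\<alpha> \<le> R x" "R x \<le> 1/\<alpha>"
proof -
  have "\<alpha> * \<alpha> \<le> 1" using alpha by (simp add: mult_le_one)
  then have "\<alpha> \<le> 1/\<alpha>" using alpha by (simp add: field_simps)
  then show "\<alpha> \<le> R x" "R x \<le> 1/\<alpha>" by (auto simp: R_def)
qed

lemma R_ae: "AE x in q. R x = dens p q x"
  using dens_bounds by eventually_elim (auto simp: R_def)

lemma p_dens: "p = density q (\<lambda>x. ennreal (R x))"
proof -
  have "p = density q (RN_deriv q p)"
    using q.density_RN_deriv[OF ac_pq pq_sets] by simp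
  also have "\<dots> = density q (\<lambda>x. ennreal (R x))"
  proof (rule density_cong)
    show "AE x in q. RN_deriv q p x = ennreal (R x)"
      using q.RN_deriv_finite[OF p.sigma_finite_measure_axioms ac_pq pq_sets] R_ae
      by eventually_elim (auto simp: dens_def less_top)
  qed auto
  finally show ?thesis .
qed

lemma space_p: "space p = space q" using pq_sets sets_eq_imp_space_eq by blast

lemma meas_p: "f \<in> borel_measurable p \<longleftrightarrow> f \<in> borel_measurable q"
  using pq_sets measurable_cong_sets by blast

lemma int_p_eq:
  fixes f :: "'a \<Rightarrow> real"
  assumes "f \<in> borel_measurable q"
  shows "integral\<^sup>L p f = (\<integral>x. R x * f x \<partial>q)"
  using integral_density[of f q R] assms R_bounds alpha
  by (subst p_dens) (auto intro: order.trans[OF less_imp_le])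

lemma integrable_p_eq:
  fixes f :: "'a \<Rightarrow> real"
  assumes "f \<in> borel_measurable q"
  shows "integrable p f \<longleftrightarrow> integrable q (\<lambda>x. R x * f x)"
  using integrable_density[of f q R] assms R_bounds alpha
  by (subst p_dens) (auto intro: order.trans[OF less_imp_le])

lemma w_bounds:
  assumes "\<rho> \<in> {0..1}"
  shows "\<alpha> \<le> w \<rho> x" "w \<rho> x \<le> 1/\<alpha>"
proof -
  have a: "\<rho> * \<alpha> \<le> \<rho> * R x" "\<rho> * R x \<le> \<rho> * (1/\<alpha>)"
    using assms mult_left_mono[OF R_bounds(1)[of x], of \<rho>] mult_left_mono[OF R_bounds(2)[of x], of \<rho>] by auto
  have "1 \<le> 1/\<alpha>" using alpha by simp
  then have "(1 - \<rho>) * \<alpha> \<le> (1 - \<rho>)" "(1-\<rho>) \<le> (1 - \<rho>) * (1/\<alpha>)"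
    using assms alpha mult_left_mono[of \<alpha> 1 "1-\<rho>"] mult_left_mono[of 1 "1/\<alpha>" "1-\<rho>"] by auto
  then show "\<alpha> \<le> w \<rho> x" "w \<rho> x \<le> 1/\<alpha>"
    using a alpha by (auto simp: w_def algebra_simps diff_divide_distrib)
qed

lemma w_pos: "\<rho> \<in> {0..1} \<Longrightarrow> 0 < w \<rho> x"
  using w_bounds(1)[of \<rho> x] alpha by linarith

lemma int_a: "integrable q (\<lambda>x. \<theta> \<bullet> \<phi> x)"
  using int_q by (simp add: inner_commute)
lemma int_Ra: "integrable q (\<lambda>x. R x * (\<theta> \<bullet> \<phi> x))"
  using int_p integrable_p_eq[of "\<lambda>x. \<theta> \<bullet> \<phi> x"] by (simp add: inner_commute)
lemma int_a2: "integrable q (\<lambda>x. (\<theta> \<bullet> \<phi> x)^2)"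
  using integrable_bounded_linear[OF linear_quad int2_q] by (simp add: outer_quad)
lemma int_Ra2: "integrable q (\<lambda>x. R x * (\<theta> \<bullet> \<phi> x)^2)"
  using integrable_bounded_linear[OF linear_quad int2_p] integrable_p_eq[of "\<lambda>x. (\<theta> \<bullet> \<phi> x)^2"]
  by (simp add: outer_quad)

lemma quad_Sp: "\<theta> \<bullet> (Sp *v \<theta>) = (\<integral>x. R x * (\<theta> \<bullet> \<phi> x)^2 \<partial>q)"
proof -
  have "\<theta> \<bullet> (Sp *v \<theta>) = (\<integral>x. \<theta> \<bullet> (outer (\<phi> x) *v \<theta>) \<partial>p)"
    unfolding Sp_def second_moment_def
    by (rule integral_bounded_linear[OF linear_quad int2_p, symmetric])
  also have "\<dots> = (\<integral>x. (\<theta> \<bullet> \<phi> x)^2 \<partial>p)" by (simp add: outer_quad)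
  also have "\<dots> = (\<integral>x. R x * (\<theta> \<bullet> \<phi> x)^2 \<partial>q)" by (rule int_p_eq) measurable
  finally show ?thesis .
qed

lemma quad_Sq: "\<theta> \<bullet> (Sq *v \<theta>) = (\<integral>x. (\<theta> \<bullet> \<phi> x)^2 \<partial>q)"
proof -
  have "\<theta> \<bullet> (Sq *v \<theta>) = (\<integral>x. \<theta> \<bullet> (outer (\<phi> x) *v \<theta>) \<partial>q)"
    unfolding Sq_def second_moment_def
    by (rule integral_bounded_linear[OF linear_quad int2_q, symmetric])
  also have "\<dots> = (\<integral>x. (\<theta> \<bullet> \<phi> x)^2 \<partial>q)" by (simp add: outer_quad)
  finally show ?thesis .
qed

lemma quad_Mr_affine: "\<theta> \<bullet> (Mr \<rho> *v \<theta>) = \<rho> * (\<theta> \<bullet> (Sp *v \<theta>)) + (1 - \<rho>) * (\<theta> \<bullet> (Sq *v \<theta>))"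
  by (simp add: Mr_def algebra_simps inner_add_right scaleR_matrix_vector_assoc[symmetric])

lemma quad_Mr: "\<theta> \<bullet> (Mr \<rho> *v \<theta>) = (\<integral>x. w \<rho> x * (\<theta> \<bullet> \<phi> x)^2 \<partial>q)"
proof -
  have "\<theta> \<bullet> (Mr \<rho> *v \<theta>) = \<rho> * (\<integral>x. R x * (\<theta> \<bullet> \<phi> x)^2 \<partial>q) + (1 - \<rho>) * (\<integral>x. (\<theta> \<bullet> \<phi> x)^2 \<partial>q)"
    by (simp add: quad_Mr_affine quad_Sp quad_Sq)
  also have "\<dots> = (\<integral>x. \<rho> * (R x * (\<theta> \<bullet> \<phi> x)^2) + (1 - \<rho>) * (\<theta> \<bullet> \<phi> x)^2 \<partial>q)"
    using int_Ra2 int_a2 by simp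
  also have "\<dots> = (\<integral>x. w \<rho> x * (\<theta> \<bullet> \<phi> x)^2 \<partial>q)"
    by (rule Bochner_Integration.integral_cong) (auto simp: w_def algebra_simps)
  finally show ?thesis .
qed

lemma dv_inner: "dv \<bullet> \<theta> = (\<integral>x. (R x - 1) * (\<theta> \<bullet> \<phi> x) \<partial>q)"
proof -
  have "mean p \<phi> \<bullet> \<theta> = (\<integral>x. \<phi> x \<bullet> \<theta> \<partial>p)" unfolding mean_def using int_p by simp
  also have "\<dots> = (\<integral>x. R x * (\<theta> \<bullet> \<phi> x) \<partial>q)" by (subst int_p_eq) (auto simp: inner_commute)
  finally have 1: "mean p \<phi> \<bullet> \<theta> = (\<integral>x. R x * (\<theta> \<bullet> \<phi> x) \<partial>q)" .
  have 2: "mean q \<phi> \<bullet> \<theta> = (\<integral>x. \<theta> \<bullet> \<phi> x \<partial>q)" unfolding mean_def using int_q by (simp add: inner_commute)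
  show ?thesis unfolding dv_def inner_diff_left 1 2
    using int_Ra int_a by (simp add: left_diff_distrib)
qed

end


lemma sym_inner: "transpose A = A \<Longrightarrow> x \<bullet> (A *v y) = y \<bullet> (A *v (x::real^'n::finite))"
proof -
  assume A: "transpose A = A"
  have "x \<bullet> (A *v y) = (x v* A) \<bullet> y" by (simp add: dot_lmul_matrix)
  also have "x v* A = A *v x" using vector_transpose_matrix[of x A] A by simp
  finally show ?thesis by (simp add: inner_commute)
qed

lemma transpose_lin: "transpose (a *\<^sub>R A + b *\<^sub>R B) = a *\<^sub>R transpose A + b *\<^sub>R transpose (B::real^'n^'n)"
  by (simp add: transpose_def vec_eq_iff)

lemma AE_iff_helper: "AE x in M. P x = Q x \<Longrightarrow> (AE x in M. P x) \<longleftrightarrow> (AE x in M. Q x)"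
  by (auto elim: AE_mp)

context P1 begin

lemma Rm1_abs: "\<bar>R x - 1\<bar> \<le> 1/\<alpha>"
proof -
  have "1 \<le> 1/\<alpha>" using alpha by simp
  moreover have "\<alpha> \<le> R x" "R x \<le> 1/\<alpha>" using R_bounds by auto
  ultimately show ?thesis using alpha unfolding abs_le_iff by linarith
qed

lemma int_g: assumes "\<rho> \<in> {0..1}" shows "integrable q (\<lambda>x. (R x - 1)^2 / w \<rho> x)"
proof (rule q.integrable_const_bound[where B="(1/\<alpha>)^2/\<alpha>"])
  show "AE x in q. norm ((R x - 1)^2 / w \<rho> x) \<le> (1/\<alpha>)^2/\<alpha>"
  proof (rule AE_I2)
    fix x
    have "(R x - 1)^2 \<le> (1/\<alpha>)^2"
      using power_mono[OF Rm1_abs[of x], of 2] by simp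
    then show "norm ((R x - 1)^2 / w \<rho> x) \<le> (1/\<alpha>)^2/\<alpha>"
      using w_bounds[OF assms, of x] alpha w_pos[OF assms, of x]
      by (auto intro!: frac_le)
  qed
qed (simp add: w_def)

lemma int_Rm1a: "integrable q (\<lambda>x. (R x - 1) * (\<theta> \<bullet> \<phi> x))"
proof -
  have "integrable q (\<lambda>x. R x * (\<theta> \<bullet> \<phi> x) - (\<theta> \<bullet> \<phi> x))" using int_Ra int_a by simp
  then show ?thesis by (simp add: left_diff_distrib)
qed

lemma int_wa2: "integrable q (\<lambda>x. w \<rho> x * (\<theta> \<bullet> \<phi> x)^2)"
proof -
  have "integrable q (\<lambda>x. \<rho> * (R x * (\<theta> \<bullet> \<phi> x)^2) + (1 - \<rho>) * (\<theta> \<bullet> \<phi> x)^2)"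
    using int_Ra2 int_a2 by simp
  then show ?thesis by (simp add: w_def algebra_simps)
qed

lemma gap_int: assumes "\<rho> \<in> {0..1}"
  shows "integrable q (\<lambda>x. ((R x - 1) - w \<rho> x * (\<theta> \<bullet> \<phi> x))^2 / w \<rho> x)"
    and "g' \<rho> - aa \<rho> \<theta> = (\<integral>x. ((R x - 1) - w \<rho> x * (\<theta> \<bullet> \<phi> x))^2 / w \<rho> x \<partial>q)"
proof -
  have eq: "((R x - 1) - w \<rho> x * (\<theta> \<bullet> \<phi> x))^2 / w \<rho> x
     = (R x - 1)^2 / w \<rho> x - 2 * ((R x - 1) * (\<theta> \<bullet> \<phi> x)) + w \<rho> x * (\<theta> \<bullet> \<phi> x)^2" for x
    using w_pos[OF assms, of x] by (simp add: field_simps power2_eq_square)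
  have I: "integrable q (\<lambda>x. (R x - 1)^2 / w \<rho> x - 2 * ((R x - 1) * (\<theta> \<bullet> \<phi> x)) + w \<rho> x * (\<theta> \<bullet> \<phi> x)^2)"
    using int_g[OF assms] int_Rm1a int_wa2 by simp
  then show "integrable q (\<lambda>x. ((R x - 1) - w \<rho> x * (\<theta> \<bullet> \<phi> x))^2 / w \<rho> x)"
    by (simp only: eq)
  have "g' \<rho> - aa \<rho> \<theta> = (\<integral>x. (R x - 1)^2 / w \<rho> x \<partial>q) - 2 * (\<integral>x. (R x - 1) * (\<theta> \<bullet> \<phi> x) \<partial>q)
      + (\<integral>x. w \<rho> x * (\<theta> \<bullet> \<phi> x)^2 \<partial>q)"
    by (simp add: g'_def aa_def dv_inner quad_Mr)
  also have "\<dots> = (\<integral>x. (R x - 1)^2 / w \<rho> x - 2 * ((R x - 1) * (\<theta> \<bullet> \<phi> x)) + w \<rho> x * (\<theta> \<bullet> \<phi> x)^2 \<partial>q)"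
    using int_g[OF assms] int_Rm1a int_wa2 by simp
  finally show "g' \<rho> - aa \<rho> \<theta> = (\<integral>x. ((R x - 1) - w \<rho> x * (\<theta> \<bullet> \<phi> x))^2 / w \<rho> x \<partial>q)"
    by (simp only: eq)
qed

lemma aa_le_g: assumes "\<rho> \<in> {0..1}" shows "aa \<rho> \<theta> \<le> g' \<rho>"
proof -
  have "0 \<le> (\<integral>x. ((R x - 1) - w \<rho> x * (\<theta> \<bullet> \<phi> x))^2 / w \<rho> x \<partial>q)"
    using w_pos[OF assms] by (intro integral_nonneg_AE) (auto intro!: divide_nonneg_pos)
  then show ?thesis using gap_int(2)[OF assms, of \<theta>] by simp
qed

lemma aa_eq_g: assumes "\<rho> \<in> {0..1}"
  shows "aa \<rho> \<theta> = g' \<rho> \<longleftrightarrow> (AE x in q. (dens p q x - 1) / (\<rho> * dens p q x + 1 - \<rho>) = \<theta> \<bullet> \<phi> x)"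
proof -
  have "aa \<rho> \<theta> = g' \<rho> \<longleftrightarrow> (\<integral>x. ((R x - 1) - w \<rho> x * (\<theta> \<bullet> \<phi> x))^2 / w \<rho> x \<partial>q) = 0"
    using gap_int(2)[OF assms, of \<theta>] by auto
  also have "\<dots> \<longleftrightarrow> (AE x in q. ((R x - 1) - w \<rho> x * (\<theta> \<bullet> \<phi> x))^2 / w \<rho> x = 0)"
    using w_pos[OF assms] gap_int(1)[OF assms, of \<theta>]
    by (intro integral_nonneg_eq_0_iff_AE) (auto intro!: divide_nonneg_pos)
  also have "\<dots> \<longleftrightarrow> (AE x in q. (dens p q x - 1) / (\<rho> * dens p q x + 1 - \<rho>) = \<theta> \<bullet> \<phi> x)"
  proof (rule AE_iff_helper)
    show "AE x in q. (((R x - 1) - w \<rho> x * (\<theta> \<bullet> \<phi> x))^2 / w \<rho> x = 0) =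
        ((dens p q x - 1) / (\<rho> * dens p q x + 1 - \<rho>) = \<theta> \<bullet> \<phi> x)"
      using R_ae
    proof eventually_elim
      case (elim x)
      have wp: "w \<rho> x \<noteq> 0" using w_pos[OF assms, of x] by simp
      have "(((R x - 1) - w \<rho> x * (\<theta> \<bullet> \<phi> x))^2 / w \<rho> x = 0) \<longleftrightarrow> (R x - 1) = w \<rho> x * (\<theta> \<bullet> \<phi> x)"
        using wp by simp
      also have "\<dots> \<longleftrightarrow> (R x - 1) / w \<rho> x = \<theta> \<bullet> \<phi> x" using wp by (auto simp: field_simps)
      finally show ?case using elim by (simp add: w_def)
    qed
  qed
  finally show ?thesis .
qed

end


lemma mv_neg: "(A::real^'n::finite^'k::finite) *v (- x) = - (A *v x)"
  using matrix_vector_mult_scaleR[of A "-1" x] by simp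

context P1 begin

lemma Sp_sym: "transpose Sp = Sp"
proof -
  have "transpose Sp = (\<integral>x. transpose (outer (\<phi> x)) \<partial>p)"
    unfolding Sp_def second_moment_def
    by (rule integral_bounded_linear[OF linear_transpose' int2_p, symmetric])
  then show ?thesis by (simp add: transpose_outer Sp_def second_moment_def)
qed

lemma Sq_sym: "transpose Sq = Sq"
proof -
  have "transpose Sq = (\<integral>x. transpose (outer (\<phi> x)) \<partial>q)"
    unfolding Sq_def second_moment_def
    by (rule integral_bounded_linear[OF linear_transpose' int2_q, symmetric])
  then show ?thesis by (simp add: transpose_outer Sq_def second_moment_def)
qed

lemma Mr_sym: "transpose (Mr \<rho>) = Mr \<rho>"
  unfolding Mr_def transpose_lin Sp_sym Sq_sym ..

lemma Mr_psd: assumes "\<rho> \<in> {0..1}" shows "0 \<le> \<theta> \<bullet> (Mr \<rho> *v \<theta>)"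
  unfolding quad_Mr using w_pos[OF assms, THEN less_imp_le] by (intro integral_nonneg_AE) (auto intro!: AE_I2 mult_nonneg_nonneg)

lemma ker_dv: assumes "\<rho> \<in> {0..1}" and z: "z \<bullet> (Mr \<rho> *v z) = 0" shows "dv \<bullet> z = 0"
proof -
  have "(\<integral>x. w \<rho> x * (z \<bullet> \<phi> x)^2 \<partial>q) = 0" using z quad_Mr by simp
  then have "AE x in q. w \<rho> x * (z \<bullet> \<phi> x)^2 = 0"
    using w_pos[OF assms(1), THEN less_imp_le] int_wa2
    by (subst integral_nonneg_eq_0_iff_AE[symmetric]) (auto intro!: AE_I2 mult_nonneg_nonneg)
  then have "AE x in q. (R x - 1) * (z \<bullet> \<phi> x) = 0"
  proof eventually_elim
    case (elim x)
    then have "(z \<bullet> \<phi> x)^2 = 0" using w_pos[OF assms(1), of x] by simp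
    then show ?case by simp
  qed
  then show ?thesis unfolding dv_inner by (simp add: integral_cong_AE[where g="\<lambda>_. 0"])
qed

lemma exists_max: assumes "\<rho> \<in> {0..1}" shows "\<exists>\<theta>0. Mr \<rho> *v \<theta>0 = dv"
proof -
  let ?S = "range (\<lambda>\<theta>. Mr \<rho> *v \<theta>)"
  have sp: "span ?S = ?S"
    using span_linear_image[OF matrix_vector_mul_linear, of "Mr \<rho>" UNIV] by simp
  obtain y z where y: "y \<in> span ?S" and z: "\<And>v. v \<in> span ?S \<Longrightarrow> orthogonal z v" and d: "dv = y + z"
    using orthogonal_subspace_decomp_exists[of ?S dv] by blast
  have "orthogonal z (Mr \<rho> *v z)" using z sp by auto
  then have "z \<bullet> (Mr \<rho> *v z) = 0" by (simp add: orthogonal_def)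
  then have "dv \<bullet> z = 0" by (rule ker_dv[OF assms])
  moreover have "y \<bullet> z = 0" using z[OF y] by (simp add: orthogonal_def inner_commute)
  ultimately have "z \<bullet> z = 0" using d by (simp add: inner_add_left)
  then have "z = 0" by simp
  then have "dv \<in> ?S" using d y sp by simp
  then show ?thesis by auto
qed

lemma aa_max: assumes "\<rho> \<in> {0..1}" and t0: "Mr \<rho> *v \<theta>0 = dv"
  shows "aa \<rho> \<theta> \<le> aa \<rho> \<theta>0"
proof -
  have s: "\<theta>0 \<bullet> (Mr \<rho> *v \<theta>) = \<theta> \<bullet> dv" using sym_inner[OF Mr_sym] t0 by metis
  have "aa \<rho> \<theta>0 - aa \<rho> \<theta> = (\<theta> - \<theta>0) \<bullet> (Mr \<rho> *v (\<theta> - \<theta>0))"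
    unfolding aa_def using s t0
    by (simp add: matrix_vector_mult_diff_distrib inner_diff_left inner_diff_right inner_commute)
  moreover have "0 \<le> (\<theta> - \<theta>0) \<bullet> (Mr \<rho> *v (\<theta> - \<theta>0))" by (rule Mr_psd[OF assms(1)])
  ultimately show ?thesis by simp
qed

lemma admissible_iff: assumes "\<rho> \<in> {0..1}"
  shows "psd (block (Mr \<rho>) dv t) \<longleftrightarrow> (\<forall>\<theta>. aa \<rho> \<theta> \<le> t)"
proof
  assume P: "psd (block (Mr \<rho>) dv t)"
  show "\<forall>\<theta>. aa \<rho> \<theta> \<le> t"
  proof
    fix \<theta>
    define v :: "real^('m option)" where "v = (\<chi> i. case i of None \<Rightarrow> 1 | Some a \<Rightarrow> - \<theta> $ a)"
    have 1: "(\<chi> a. v $ Some a) = - \<theta>" by (simp add: v_def vec_eq_iff)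
    have 2: "v $ None = 1" by (simp add: v_def)
    have "0 \<le> v \<bullet> (block (Mr \<rho>) dv t *v v)" using P by (simp add: psd_def)
    then show "aa \<rho> \<theta> \<le> t" unfolding block_quad 1 2 aa_def
      using matrix_vector_mult_scaleR[of "Mr \<rho>" "-1" \<theta>] by simp
  qed
next
  assume A: "\<forall>\<theta>. aa \<rho> \<theta> \<le> t"
  show "psd (block (Mr \<rho>) dv t)"
    unfolding psd_def
  proof (intro conjI allI)
    show "transpose (block (Mr \<rho>) dv t) = block (Mr \<rho>) dv t" by (rule block_sym[OF Mr_sym])
    fix v :: "real^('m option)"
    define \<theta> where "\<theta> = (\<chi> a. v $ Some a)"
    define s where "s = v $ None"
    show "0 \<le> v \<bullet> (block (Mr \<rho>) dv t *v v)"
      unfolding block_quad \<theta>_def[symmetric] s_def[symmetric]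
    proof (cases "s = 0")
      case True then show "0 \<le> \<theta> \<bullet> (Mr \<rho> *v \<theta>) + 2 * s * (dv \<bullet> \<theta>) + s\<^sup>2 * t"
        using Mr_psd[OF assms] by simp
    next
      case False
      define u where "u = (- 1 / s) *\<^sub>R \<theta>"
      have th: "\<theta> = (- s) *\<^sub>R u" using False by (simp add: u_def)
      have "0 \<le> s^2 * (t - aa \<rho> u)" using A by simp
      also have "s^2 * (t - aa \<rho> u) = \<theta> \<bullet> (Mr \<rho> *v \<theta>) + 2 * s * (dv \<bullet> \<theta>) + s\<^sup>2 * t"
        unfolding th aa_def by (simp add: mv_neg matrix_vector_mult_scaleR algebra_simps power2_eq_square)
      finally show "0 \<le> \<theta> \<bullet> (Mr \<rho> *v \<theta>) + 2 * s * (dv \<bullet> \<theta>) + s\<^sup>2 * t" .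
    qed
  qed
qed

end


context P1 begin

definition g where "g \<rho> = g' (cl \<rho>)"
definition DD :: "(real^'m) set" where
  "DD = (SOME D. countable D \<and> (\<forall>X. open X \<longrightarrow> X \<noteq> {} \<longrightarrow> (\<exists>d\<in>D. d \<in> X)))"
definition ts where "ts \<rho> = (SUP \<theta>\<in>DD. aa (cl \<rho>) \<theta>)"

lemma DD: "countable DD" "\<And>X. open X \<Longrightarrow> X \<noteq> {} \<Longrightarrow> \<exists>d\<in>DD. d \<in> X"
proof -
  have "\<exists>D::(real^'m) set. countable D \<and> (\<forall>X. open X \<longrightarrow> X \<noteq> {} \<longrightarrow> (\<exists>d\<in>D. d \<in> X))"
    using countable_dense_exists[where 'a="real^'m"] by blast
  then have "countable DD \<and> (\<forall>X. open X \<longrightarrow> X \<noteq> {} \<longrightarrow> (\<exists>d\<in>DD. d \<in> X))"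
    unfolding DD_def by (rule someI_ex)
  then show "countable DD" "\<And>X. open X \<Longrightarrow> X \<noteq> {} \<Longrightarrow> \<exists>d\<in>DD. d \<in> X" by auto
qed

lemma DD_ne: "DD \<noteq> {}" using DD(2)[of UNIV] by auto

lemma aa_affine: "aa \<rho> \<theta> = 2 * (dv \<bullet> \<theta>) - (\<rho> * (\<theta> \<bullet> (Sp *v \<theta>)) + (1 - \<rho>) * (\<theta> \<bullet> (Sq *v \<theta>)))"
  unfolding aa_def quad_Mr_affine ..

lemma aa_cont: "continuous_on UNIV (aa \<rho>)"
proof -
  have "continuous_on UNIV (\<lambda>\<theta>. Mr \<rho> *v \<theta>)"
    by (rule linear_continuous_on[OF matrix_vector_mul_bounded_linear])
  then show ?thesis unfolding aa_def[abs_def]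
    by (intro continuous_intros)
qed

lemma cl_cl: "cl \<rho> \<in> {0..1}" using cl_range[of \<rho>] by auto

lemma ts_val: assumes t0: "Mr (cl \<rho>) *v \<theta>0 = dv" shows "ts \<rho> = aa (cl \<rho>) \<theta>0"
proof -
  have le: "aa (cl \<rho>) \<theta> \<le> aa (cl \<rho>) \<theta>0" for \<theta> by (rule aa_max[OF cl_cl t0])
  have bdd: "bdd_above (aa (cl \<rho>) ` DD)" using le by (intro bdd_aboveI2) auto
  have 1: "ts \<rho> \<le> aa (cl \<rho>) \<theta>0" unfolding ts_def using DD_ne le by (intro cSUP_least) auto
  have "\<not> ts \<rho> < aa (cl \<rho>) \<theta>0"
  proof
    assume lt: "ts \<rho> < aa (cl \<rho>) \<theta>0"
    have "open {\<theta>. ts \<rho> < aa (cl \<rho>) \<theta>}"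
      by (rule open_Collect_less[OF continuous_on_const aa_cont])
    then obtain d where d: "d \<in> DD" "ts \<rho> < aa (cl \<rho>) d" using DD(2) lt by blast
    have "aa (cl \<rho>) d \<le> ts \<rho>" unfolding ts_def using bdd d(1) by (rule cSUP_upper2) simp
    then show False using d(2) by simp
  qed
  then show ?thesis using 1 by simp
qed

lemma g'_bounds: assumes "\<rho> \<in> {0..1}" shows "0 \<le> g' \<rho>" "g' \<rho> \<le> (1/\<alpha>)^2/\<alpha>"
proof -
  show "0 \<le> g' \<rho>" unfolding g'_def using w_pos[OF assms] 
    by (intro integral_nonneg_AE AE_I2 divide_nonneg_pos) auto
  have "g' \<rho> \<le> (\<integral>x. (1/\<alpha>)^2/\<alpha> \<partial>q)" unfolding g'_def
  proof (rule integral_mono[OF int_g[OF assms]])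
    fix x
    have "(R x - 1)^2 \<le> (1/\<alpha>)^2"
      using power_mono[OF Rm1_abs[of x], of 2] by simp
    then show "(R x - 1)^2 / w \<rho> x \<le> (1/\<alpha>)^2/\<alpha>"
      using w_bounds[OF assms, of x] alpha w_pos[OF assms, of x]
      by (auto intro!: frac_le)
  qed simp
  then show "g' \<rho> \<le> (1/\<alpha>)^2/\<alpha>" by (simp add: q.prob_space)
qed

lemma ts_bounds: "0 \<le> ts \<rho>" "ts \<rho> \<le> g \<rho>"
proof -
  obtain \<theta>0 where t0: "Mr (cl \<rho>) *v \<theta>0 = dv" using exists_max[OF cl_cl] by blast
  have "aa (cl \<rho>) 0 \<le> aa (cl \<rho>) \<theta>0" by (rule aa_max[OF cl_cl t0])
  then show "0 \<le> ts \<rho>" using ts_val[OF t0] by (simp add: aa_def)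
  show "ts \<rho> \<le> g \<rho>" using ts_val[OF t0] aa_le_g[OF cl_cl] by (simp add: g_def)
qed

lemma cl_meas_nu[measurable]: "cl \<in> borel_measurable \<nu>"
  using cl_meas measurable_cong_sets[OF nu_sets refl] by blast

lemma ts_meas[measurable]: "ts \<in> borel_measurable \<nu>"
  unfolding ts_def
proof (rule borel_measurable_cSUP[OF DD(1)])
  fix \<theta> show "(\<lambda>\<rho>. aa (cl \<rho>) \<theta>) \<in> borel_measurable \<nu>" unfolding aa_affine by measurable
next
  fix \<rho> show "bdd_above ((\<lambda>\<theta>. aa (cl \<rho>) \<theta>) ` DD)"
    using aa_le_g[OF cl_cl] by (intro bdd_aboveI2) auto
qed

lemma g_meas[measurable]: "g \<in> borel_measurable \<nu>"
proof -
  have "(\<lambda>\<rho>. \<integral>x. (R x - 1)^2 / (cl \<rho> * R x + 1 - cl \<rho>) \<partial>q) \<in> borel_measurable \<nu>"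
    by measurable
  then show ?thesis unfolding g_def[abs_def] g'_def w_def .
qed

lemma g_bounded: "norm (g \<rho>) \<le> (1/\<alpha>)^2/\<alpha>"
  using g'_bounds[OF cl_cl] by (simp add: g_def)

lemma g_int: "integrable \<nu> g"
  by (rule nu.integrable_const_bound[OF AE_I2[OF g_bounded]]) simp

lemma ts_int: "integrable \<nu> ts"
  by (rule Bochner_Integration.integrable_bound[OF g_int]) (auto intro!: AE_I2 simp: ts_bounds intro: order.trans[OF ts_bounds(2) abs_ge_self])

end


context P1 begin

lemma id_nu[measurable]: "(\<lambda>\<rho>::real. \<rho>) \<in> borel_measurable \<nu>"
  using measurable_ident_sets[OF nu_sets] by (simp add: id_def)

lemma AE_nu: "AE \<rho> in \<nu>. \<rho> \<in> {0..1}"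
  by (rule nu.AE_prob_1) (simp add: measure_def nu_supp)

lemma fdiv_eq: "fdiv \<nu> p q = (1/2) * (\<integral>\<rho>. g \<rho> \<partial>\<nu>)"
proof -
  define H where "H \<rho> x = (1/2) * ((R x - 1)^2 / (cl \<rho> * R x + 1 - cl \<rho>))" for \<rho> x
  have H_meas: "case_prod H \<in> borel_measurable (\<nu> \<Otimes>\<^sub>M q)" unfolding H_def by measurable
  have "fdiv \<nu> p q = (\<integral>x. (\<integral>\<rho>. H \<rho> x \<partial>\<nu>) \<partial>q)"
    unfolding fdiv_def
  proof (rule integral_cong_AE)
    show "AE x in q. fgen \<nu> (dens p q x) = (\<integral>\<rho>. H \<rho> x \<partial>\<nu>)"
      using R_ae
    proof eventually_elim
      case (elim x)
      have "fgen \<nu> (dens p q x) = (\<integral>\<rho>. 1/2 * (R x - 1)^2 / (\<rho> * R x + 1 - \<rho>) \<partial>\<nu>)"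
        unfolding fgen_def elim ..
      also have "\<dots> = (\<integral>\<rho>. H \<rho> x \<partial>\<nu>)"
      proof (rule integral_cong_AE)
        show "AE \<rho> in \<nu>. 1/2 * (R x - 1)^2 / (\<rho> * R x + 1 - \<rho>) = H \<rho> x"
          using AE_nu by eventually_elim (simp add: H_def cl_id)
      qed (unfold H_def, measurable)
      finally show ?case .
    qed
  next
    show "(\<lambda>x. fgen \<nu> (dens p q x)) \<in> borel_measurable q"
    proof -
      have "(\<lambda>x. \<integral>\<rho>. 1/2 * (dens p q x - 1)^2 / (\<rho> * dens p q x + 1 - \<rho>) \<partial>\<nu>) \<in> borel_measurable q"
        using nu_sets unfolding dens_def by measurable
      then show ?thesis unfolding fgen_def .
    qed
  next
    show "(\<lambda>x. \<integral>\<rho>. H \<rho> x \<partial>\<nu>) \<in> borel_measurable q" using H_meas by measurable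
  qed
  also have "\<dots> = (\<integral>\<rho>. (\<integral>x. H \<rho> x \<partial>q) \<partial>\<nu>)"
  proof -
    interpret PQ: pair_prob_space \<nu> q ..
    have "integrable (\<nu> \<Otimes>\<^sub>M q) (case_prod H)"
    proof (rule PQ.integrable_const_bound[where B="(1/\<alpha>)^2/\<alpha>"])
      show "AE z in \<nu> \<Otimes>\<^sub>M q. norm (case_prod H z) \<le> (1/\<alpha>)^2/\<alpha>"
      proof (rule AE_I2, clarify)
        fix \<rho> x
        have "(R x - 1)^2 \<le> (1/\<alpha>)^2"
          using power_mono[OF Rm1_abs[of x], of 2] by simp
        then have "(R x - 1)^2 / w (cl \<rho>) x \<le> (1/\<alpha>)^2/\<alpha>"
          using w_bounds[OF cl_cl[of \<rho>], of x] alpha w_pos[OF cl_cl[of \<rho>], of x]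
          by (auto intro!: frac_le)
        moreover have "0 \<le> (R x - 1)^2 / w (cl \<rho>) x" using w_pos[OF cl_cl[of \<rho>], of x] by simp
        moreover have "0 \<le> (1/\<alpha>)^2/\<alpha>" using alpha by simp
        moreover have gen: "0 \<le> y \<Longrightarrow> y \<le> B \<Longrightarrow> norm ((1/2::real) * y) \<le> B" for y B by simp
        moreover have "H \<rho> x = (1/2) * ((R x - 1)^2 / w (cl \<rho>) x)" by (simp add: H_def w_def)
        ultimately show "norm (H \<rho> x) \<le> (1/\<alpha>)^2/\<alpha>" by metis
      qed
    qed (rule H_meas)
    then show ?thesis by (rule PQ.Fubini_integral)
  qed
  also have "\<dots> = (\<integral>\<rho>. (1/2) * g \<rho> \<partial>\<nu>)"
  proof -
    have "(\<integral>x. H \<rho> x \<partial>q) = (1/2) * g \<rho>" for \<rho>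
      unfolding H_def g_def g'_def w_def by (rule integral_mult_right_zero)
    then show ?thesis by (simp only:)
  qed
  also have "\<dots> = (1/2) * (\<integral>\<rho>. g \<rho> \<partial>\<nu>)" by simp
  finally show ?thesis .
qed

end


context P1 begin

lemma ts_adm: assumes "\<rho> \<in> {0..1}" shows "psd (block (Mr \<rho>) dv (ts \<rho>))"
proof -
  obtain \<theta>0 where t0: "Mr \<rho> *v \<theta>0 = dv" using exists_max[OF assms] by blast
  have t0': "Mr (cl \<rho>) *v \<theta>0 = dv" using t0 cl_id[OF assms] by simp
  show ?thesis unfolding admissible_iff[OF assms]
    using ts_val[OF t0'] aa_max[OF assms t0] cl_id[OF assms] by simp
qed

lemma main: "moment_div \<nu> p q \<phi> \<le> fdiv \<nu> p q
    \<and> (moment_div \<nu> p q \<phi> = fdiv \<nu> p q \<longleftrightarrow>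
         (AE \<rho> in \<nu>. \<exists>\<theta>::real^'m. AE x in q.
            (dens p q x - 1) / (\<rho> * dens p q x + 1 - \<rho>) = \<theta> \<bullet> \<phi> x))"
proof -
  define S where "S = {(1/2) * (\<integral>\<rho>. t \<rho> \<partial>\<nu>) | t. integrable \<nu> t \<and> (\<forall>\<rho>\<in>{0..1}. psd (block (Mr \<rho>) dv (t \<rho>)))}"
  have md: "moment_div \<nu> p q \<phi> = Inf S" unfolding moment_div_def S_def Mr_def Sp_def Sq_def dv_def ..
  have adm: "AE \<rho> in \<nu>. \<rho> \<in> {0..1} \<and> (\<forall>\<theta>. aa \<rho> \<theta> \<le> t \<rho>)"
    if "\<forall>\<rho>\<in>{0..1}. psd (block (Mr \<rho>) dv (t \<rho>))" for t
    using AE_nu by eventually_elim (use that admissible_iff in auto)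
  have ts_in: "(1/2) * (\<integral>\<rho>. ts \<rho> \<partial>\<nu>) \<in> S"
    unfolding S_def using ts_int ts_adm by blast
  then have ne: "S \<noteq> {}" by blast
  have lower: "0 \<le> s" if "s \<in> S" for s
  proof -
    obtain t where t: "s = (1/2) * (\<integral>\<rho>. t \<rho> \<partial>\<nu>)" "\<forall>\<rho>\<in>{0..1}. psd (block (Mr \<rho>) dv (t \<rho>))"
      using \<open>s \<in> S\<close> unfolding S_def by blast
    have "AE \<rho> in \<nu>. 0 \<le> t \<rho>" using adm[OF t(2)] by eventually_elim (auto simp: aa_def dest: spec[of _ 0])
    then have "0 \<le> (\<integral>\<rho>. t \<rho> \<partial>\<nu>)" by (rule integral_nonneg_AE)
    then show ?thesis using t(1) by simp
  qed
  then have bdd: "bdd_below S" by (intro bdd_belowI) 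
  have le1: "Inf S \<le> (1/2) * (\<integral>\<rho>. ts \<rho> \<partial>\<nu>)" by (rule cInf_lower[OF ts_in bdd])
  have le2: "(\<integral>\<rho>. ts \<rho> \<partial>\<nu>) \<le> (\<integral>\<rho>. g \<rho> \<partial>\<nu>)"
    by (rule integral_mono[OF ts_int g_int ts_bounds(2)])
  have part1: "moment_div \<nu> p q \<phi> \<le> fdiv \<nu> p q"
    unfolding md fdiv_eq using le1 le2 by simp
  have part2: "moment_div \<nu> p q \<phi> = fdiv \<nu> p q \<longleftrightarrow>
         (AE \<rho> in \<nu>. \<exists>\<theta>::real^'m. AE x in q.
            (dens p q x - 1) / (\<rho> * dens p q x + 1 - \<rho>) = \<theta> \<bullet> \<phi> x)"
  proof
    assume eq: "moment_div \<nu> p q \<phi> = fdiv \<nu> p q"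
    have "(\<integral>\<rho>. g \<rho> \<partial>\<nu>) \<le> (\<integral>\<rho>. ts \<rho> \<partial>\<nu>)" using eq le1 unfolding md fdiv_eq by simp
    then have "(\<integral>\<rho>. g \<rho> - ts \<rho> \<partial>\<nu>) = 0" using le2 ts_int g_int by simp
    then have "AE \<rho> in \<nu>. g \<rho> - ts \<rho> = 0"
      using ts_int g_int ts_bounds(2)
      by (subst integral_nonneg_eq_0_iff_AE[symmetric]) (auto intro!: AE_I2)
    then show "AE \<rho> in \<nu>. \<exists>\<theta>::real^'m. AE x in q.
            (dens p q x - 1) / (\<rho> * dens p q x + 1 - \<rho>) = \<theta> \<bullet> \<phi> x"
      using AE_nu
    proof eventually_elim
      case (elim \<rho>)
      obtain \<theta>0 where t0: "Mr \<rho> *v \<theta>0 = dv" using exists_max[OF elim(2)] by blast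
      have t0': "Mr (cl \<rho>) *v \<theta>0 = dv" using t0 cl_id[OF elim(2)] by simp
      have "aa \<rho> \<theta>0 = g' \<rho>" using ts_val[OF t0'] elim(1) cl_id[OF elim(2)] by (simp add: g_def)
      then show ?case using aa_eq_g[OF elim(2)] by blast
    qed
  next
    assume P: "AE \<rho> in \<nu>. \<exists>\<theta>::real^'m. AE x in q.
            (dens p q x - 1) / (\<rho> * dens p q x + 1 - \<rho>) = \<theta> \<bullet> \<phi> x"
    have "fdiv \<nu> p q \<le> Inf S"
    proof (rule cInf_greatest[OF ne])
      fix s assume "s \<in> S"
      then obtain t where t: "s = (1/2) * (\<integral>\<rho>. t \<rho> \<partial>\<nu>)" "integrable \<nu> t"
          "\<forall>\<rho>\<in>{0..1}. psd (block (Mr \<rho>) dv (t \<rho>))"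
        unfolding S_def by blast
      have "AE \<rho> in \<nu>. g \<rho> \<le> t \<rho>"
        using adm[OF t(3)] P
      proof eventually_elim
        case (elim \<rho>)
        then obtain \<theta> where "AE x in q. (dens p q x - 1) / (\<rho> * dens p q x + 1 - \<rho>) = \<theta> \<bullet> \<phi> x" by blast
        then have "aa \<rho> \<theta> = g' \<rho>" using aa_eq_g[of \<rho> \<theta>] elim by blast
        moreover have "aa \<rho> \<theta> \<le> t \<rho>" using elim by blast
        ultimately show ?case using elim cl_id[of \<rho>] by (simp add: g_def)
      qed
      then have "(\<integral>\<rho>. g \<rho> \<partial>\<nu>) \<le> (\<integral>\<rho>. t \<rho> \<partial>\<nu>)"
        by (rule integral_mono_AE[OF g_int t(2)])
      then show "fdiv \<nu> p q \<le> s" unfolding fdiv_eq t(1) by simp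
    qed
    then show "moment_div \<nu> p q \<phi> = fdiv \<nu> p q" using part1 md by simp
  qed
  show ?thesis using part1 part2 by blast
qed

end
theorem proposition1:
  fixes \<nu> :: "real measure" and p q :: "'a measure" and \<phi> :: "'a \<Rightarrow> real^'m" and \<alpha> :: real
  assumes nu_prob: "prob_space \<nu>" and nu_sets: "sets \<nu> = sets borel"
    and nu_supp: "emeasure \<nu> {0..1} = 1"
    and p_prob: "prob_space p" and q_prob: "prob_space q" and pq_sets: "sets p = sets q"
    and ac_pq: "absolutely_continuous q p" and ac_qp: "absolutely_continuous p q"
    and alpha: "0 < \<alpha>" "\<alpha> \<le> 1"
    and dens_bounds: "AE x in q. \<alpha> \<le> dens p q x \<and> dens p q x \<le> 1 / \<alpha>"
    and phi_meas: "\<phi> \<in> borel_measurable q"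
    and int_p: "integrable p \<phi>" and int_q: "integrable q \<phi>"
    and int2_p: "integrable p (\<lambda>x. outer (\<phi> x))" and int2_q: "integrable q (\<lambda>x. outer (\<phi> x))"
  shows "moment_div \<nu> p q \<phi> \<le> fdiv \<nu> p q
    \<and> (moment_div \<nu> p q \<phi> = fdiv \<nu> p q \<longleftrightarrow>
         (AE \<rho> in \<nu>. \<exists>\<theta>::real^'m. AE x in q.
            (dens p q x - 1) / (\<rho> * dens p q x + 1 - \<rho>) = \<theta> \<bullet> \<phi> x))"
proof -
  interpret P1 \<nu> p q \<phi> \<alpha>
    using assms unfolding P1_def P1_axioms_def by blast
  show ?thesis by (rule main)
qed

end
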